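(* Let $M,N\in\mathbb{S}^{q+r}$. If there exists a real $\alpha\ge 0$ such that $M-\alpha N>0$, then $\mathcal{Z}_r(N)\subseteq\mathcal{Z}_r^+(M)$. Moreover, if $N\in\boldsymbol{\Pi}_{q,r}$ and $N_{22}<0$, then $\mathcal{Z}_r(N)\subseteq\mathcal{Z}_r^+(M)$ if and only if there exists a real $\alpha\ge 0$ such that $M-\alpha N>0$.
   Context: $\mathbb{S}^k$ denotes the real symmetric $k\times k$ matrices; for symmetric matrices, $A\ge 0$ ($A>0$) means positive semidefinite (definite), $A<0$ negative definite. $A^\dagger$ is the Moore–Penrose pseudo-inverse. Any $N\in\mathbb{S}^{q+r}$ is partitioned as $N=\begin{bmatrix}N_{11}&N_{12}\\ N_{21}&N_{22}\end{bmatrix}$ with $N_{11}\in\mathbb{S}^q$, $N_{22}\in\mathbb{S}^r$. The generalized Schur complement is $N\mid N_{22}:=N_{11}-N_{12}N_{22}^\dagger N_{21}$. The set $\boldsymbol{\Pi}_{q,r}$ consists of all $N\in\mathbb{S}^{q+r}$ with $N_{22}\le 0$, $N\mid N_{22}\ge 0$ and $\ker N_{22}\subseteq\ker N_{12}$. Define $\mathcal{Z}_r(\Pi)=\{Z\in\mathbb{R}^{r\times q}:\begin{bmatrix}I_q\\ Z\end{bmatrix}^\top\Pi\begin{bmatrix}I_q\\ Z\end{bmatrix}\ge 0\}$ and $\mathcal{Z}_r^+(\Pi)$ the same with $>0$. *)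

theory Defs
  imports "HOL-Analysis.Analysis"
begin

text \<open>The block index set of size q+r is the sum type 'q + 'r,
with Inl indexing the first q coordinates and Inr the last r.\<close>

definition sym_mat :: "real^'k^'k \<Rightarrow> bool" where
  "sym_mat A \<longleftrightarrow> transpose A = A"

definition psd :: "real^'k^'k \<Rightarrow> bool" where
  "psd A \<longleftrightarrow> sym_mat A \<and> (\<forall>x. 0 \<le> x \<bullet> (A *v x))"

definition pd :: "real^'k^'k \<Rightarrow> bool" where
  "pd A \<longleftrightarrow> sym_mat A \<and> (\<forall>x. x \<noteq> 0 \<longrightarrow> 0 < x \<bullet> (A *v x))"

definition nsd :: "real^'k^'k \<Rightarrow> bool" where
  "nsd A \<longleftrightarrow> psd (- A)"

definition nd :: "real^'k^'k \<Rightarrow> bool" where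
  "nd A \<longleftrightarrow> pd (- A)"

definition pinv :: "real^'n^'m \<Rightarrow> real^'m^'n" where
  "pinv A = (THE X. A ** X ** A = A \<and> X ** A ** X = X \<and>
       transpose (A ** X) = A ** X \<and> transpose (X ** A) = X ** A)"

definition blk11 :: "real^('q::finite+'r::finite)^('q+'r) \<Rightarrow> real^'q^'q" where
  "blk11 N = (\<chi> i j. N $ Inl i $ Inl j)"
definition blk12 :: "real^('q::finite+'r::finite)^('q+'r) \<Rightarrow> real^'r^'q" where
  "blk12 N = (\<chi> i j. N $ Inl i $ Inr j)"
definition blk21 :: "real^('q::finite+'r::finite)^('q+'r) \<Rightarrow> real^'q^'r" where
  "blk21 N = (\<chi> i j. N $ Inr i $ Inl j)"
definition blk22 :: "real^('q::finite+'r::finite)^('q+'r) \<Rightarrow> real^'r^'r" where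
  "blk22 N = (\<chi> i j. N $ Inr i $ Inr j)"

definition schur :: "real^('q::finite+'r::finite)^('q+'r) \<Rightarrow> real^'q^'q" where
  "schur N = blk11 N - blk12 N ** pinv (blk22 N) ** blk21 N"

definition PiSet :: "(real^('q::finite+'r::finite)^('q+'r)) set" where
  "PiSet = {N. sym_mat N \<and> nsd (blk22 N) \<and> psd (schur N) \<and>
     {x. blk22 N *v x = 0} \<subseteq> {x. blk12 N *v x = 0}}"

definition stackIZ :: "real^'q^'r \<Rightarrow> real^'q^('q+'r)" where
  "stackIZ Z = (\<chi> k. case k of Inl i \<Rightarrow> mat 1 $ i | Inr j \<Rightarrow> Z $ j)"

definition Zset :: "real^('q::finite+'r::finite)^('q+'r) \<Rightarrow> (real^'q^'r) set" where
  "Zset P = {Z. psd (transpose (stackIZ Z) ** P ** stackIZ Z)}"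

definition Zset_plus :: "real^('q::finite+'r::finite)^('q+'r) \<Rightarrow> (real^'q^'r) set" where
  "Zset_plus P = {Z. pd (transpose (stackIZ Z) ** P ** stackIZ Z)}"

end

theory Submission
  imports Defs
begin


definition qf :: "real^'n^'n \<Rightarrow> real^'n \<Rightarrow> real" where
  "qf A w = w \<bullet> (A *v w)"

lemma sym_inner:
  assumes "sym_mat A" shows "x \<bullet> (A *v y) = y \<bullet> (A *v x)"
proof -
  have "x \<bullet> (A *v y) = (x v* A) \<bullet> y" by (simp add: dot_lmul_matrix)
  also have "x v* A = transpose A *v x" by simp
  also have "transpose A = A" using assms by (simp add: sym_mat_def)
  finally show ?thesis by (simp add: inner_commute)
qed

lemma qf_add:
  assumes "sym_mat A"
  shows "qf A (a + r *\<^sub>R b) = qf A a + 2 * r * (a \<bullet> (A *v b)) + r^2 * qf A b"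
  using sym_inner[OF assms, of b a]
  by (simp add: qf_def matrix_vector_right_distrib matrix_vector_mult_scaleR inner_add_left
      inner_add_right power2_eq_square algebra_simps)

lemma qf_scale: "qf A (c *\<^sub>R w) = c^2 * qf A w"
  by (simp add: qf_def matrix_vector_mult_scaleR power2_eq_square)

lemma qf_diff: "qf (M - b *\<^sub>R N) w = qf M w - b * qf N w"
  by (simp add: qf_def matrix_vector_mult_diff_rdistrib scaleR_matrix_vector_assoc[symmetric]
      inner_diff_right)

lemma qf_tendsto:
  assumes "f \<longlonglongrightarrow> l" shows "(\<lambda>n. qf A (f n)) \<longlonglongrightarrow> qf A l"
proof -
  have "(\<lambda>n. A *v f n) \<longlonglongrightarrow> A *v l"
  proof -
    have "bounded_linear ((*v) A)"
      using matrix_vector_mul_linear[of A] linear_conv_bounded_linear by (auto simp: o_def)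
    then show ?thesis using assms by (rule bounded_linear.tendsto)
  qed
  then show ?thesis unfolding qf_def using assms by (intro tendsto_intros)
qed

lemma quad_root:
  fixes n1 n12 n2 :: real
  assumes "n1 < 0" "0 < n2"
  shows "\<exists>r. n1 + 2 * r * n12 + r^2 * n2 = 0 \<and> r * b \<le> 0"
proof -
  define D where "D = n12^2 - n1 * n2"
  have D: "D > n12^2" using assms by (simp add: D_def mult_neg_pos)
  define s where "s = sqrt D"
  have s2: "s^2 = D" using D unfolding s_def
    by (metis less_le_not_le nle_le order_trans real_sqrt_pow2 zero_le_power2)
  have sge: "s > \<bar>n12\<bar>" unfolding s_def using D
    by (metis real_sqrt_abs real_sqrt_less_mono)
  have root: "n1 + 2 * r * n12 + r^2 * n2 = 0" if "r = (- n12 + e * s) / n2" "e^2 = 1" for r e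
  proof -
    have "n2 * (n1 + 2 * r * n12 + r^2 * n2) = n1 * n2 + 2 * (n2*r) * n12 + (n2*r)^2"
      by (simp add: algebra_simps power2_eq_square)
    also have "n2 * r = - n12 + e * s" using that assms by simp
    also have "n1 * n2 + 2 * (- n12 + e * s) * n12 + (- n12 + e * s)^2 = n1*n2 + e^2 * s^2 - n12^2"
      by (simp add: algebra_simps power2_eq_square)
    also have "\<dots> = 0" using that s2 by (simp add: D_def)
    finally show ?thesis using assms by simp
  qed
  show ?thesis
  proof (cases "b \<ge> 0")
    case True
    let ?r = "(- n12 + (-1) * s) / n2"
    have "?r \<le> 0" using sge assms by (intro divide_nonpos_pos) auto
    then have "?r * b \<le> 0" using True by (rule mult_nonpos_nonneg)
    moreover have "n1 + 2 * ?r * n12 + ?r^2 * n2 = 0" by (rule root[of _ "-1"]) auto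
    ultimately show ?thesis by blast
  next
    case False
    let ?r = "(- n12 + 1 * s) / n2"
    have "?r \<ge> 0" using sge assms by (intro divide_nonneg_pos) auto
    then have "?r * b \<le> 0" using False by (intro mult_nonneg_nonpos) auto
    moreover have "n1 + 2 * ?r * n12 + ?r^2 * n2 = 0" by (rule root[of _ 1]) auto
    ultimately show ?thesis by blast
  qed
qed

lemma twovec:
  assumes sM: "sym_mat M" and sN: "sym_mat N"
    and V: "\<forall>w. w \<noteq> 0 \<and> 0 \<le> qf N w \<longrightarrow> 0 < qf M w"
    and p: "p > 0" and w1: "w1 \<noteq> 0" and w2: "w2 \<noteq> 0"
    and n1: "qf N w1 \<le> 0" and n2: "0 \<le> qf N w2"
    and f1: "p * qf M w1 \<le> q * qf N w1" and f2: "p * qf M w2 \<le> q * qf N w2"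
  shows False
proof -
  have N1: "qf N w1 < 0"
  proof (rule ccontr)
    assume "\<not> ?thesis"
    then have "qf N w1 = 0" using n1 by simp
    then have "qf M w1 \<le> 0" using f1 p by (simp add: mult_le_0_iff)
    then show False using V w1 \<open>qf N w1 = 0\<close> by force
  qed
  have N2: "qf N w2 > 0"
  proof (rule ccontr)
    assume "\<not> ?thesis"
    then have "qf N w2 = 0" using n2 by simp
    then have "qf M w2 \<le> 0" using f2 p by (simp add: mult_le_0_iff)
    then show False using V w2 \<open>qf N w2 = 0\<close> by force
  qed
  define F where "F = p *\<^sub>R M - q *\<^sub>R N"
  have sF: "sym_mat F" using sM sN unfolding F_def sym_mat_def
    by (simp add: transpose_def vec_eq_iff)
  have qfF: "qf F w = p * qf M w - q * qf N w" for w
    by (simp add: F_def qf_def matrix_vector_mult_diff_rdistrib scaleR_matrix_vector_assoc[symmetric]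
      inner_diff_right)
  obtain r where r: "qf N w1 + 2 * r * (w1 \<bullet> (N *v w2)) + r^2 * qf N w2 = 0"
    and rb: "r * (w1 \<bullet> (F *v w2)) \<le> 0"
    using quad_root[OF N1 N2] by blast
  define w where "w = w1 + r *\<^sub>R w2"
  have Nw: "qf N w = 0" using r qf_add[OF sN] by (simp add: w_def)
  have "qf F w = qf F w1 + 2 * r * (w1 \<bullet> (F *v w2)) + r^2 * qf F w2"
    using qf_add[OF sF] by (simp add: w_def)
  also have "\<dots> \<le> 0"
  proof -
    have "qf F w1 \<le> 0" "qf F w2 \<le> 0" using f1 f2 qfF by auto
    moreover have "r^2 * qf F w2 \<le> 0" using \<open>qf F w2 \<le> 0\<close> by (simp add: mult_nonneg_nonpos)
    ultimately show ?thesis using rb by linarith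
  qed
  finally have "p * qf M w \<le> 0" using qfF Nw by simp
  then have Mw: "qf M w \<le> 0" using p by (simp add: mult_le_0_iff)
  have "w \<noteq> 0"
  proof
    assume "w = 0"
    then have "w1 = (-r) *\<^sub>R w2" by (simp add: w_def eq_neg_iff_add_eq_0)
    then have "qf N w1 = r^2 * qf N w2" using qf_scale[of N "-r" w2] by (simp add: power2_eq_square)
    then show False using N1 N2 by (metis mult_nonneg_nonneg not_le zero_le_power2 less_imp_le)
  qed
  then show False using V Nw Mw by force
qed

lemma closed_param:
  fixes M N :: "real^'n^'n"
  shows "closed {t::real. 0 \<le> t \<and> t \<le> 1 \<and> (\<exists>w. w \<noteq> 0 \<and> 0 \<le> a * qf N w \<and> 0 \<le> b * qf M w
             \<and> (1-t) * qf M w \<le> t * qf N w)}" (is "closed ?S")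
  unfolding closed_sequential_limits
proof (intro allI impI, elim conjE)
  fix x :: "nat \<Rightarrow> real" and l
  assume xS: "\<forall>n. x n \<in> ?S" and xl: "x \<longlonglongrightarrow> l"
  have "\<forall>n. \<exists>u. u \<in> sphere (0::real^'n) 1 \<and> 0 \<le> a * qf N u \<and> 0 \<le> b * qf M u
             \<and> (1 - x n) * qf M u \<le> x n * qf N u"
  proof
    fix n
    obtain w where w: "w \<noteq> 0" "0 \<le> a * qf N w" "0 \<le> b * qf M w"
      "(1 - x n) * qf M w \<le> x n * qf N w" using xS by blast
    define c where "c = inverse (norm w)"
    define u where "u = c *\<^sub>R w"
    have k: "c^2 \<ge> 0" by simp
    have "norm u = 1" using w(1) by (simp add: u_def c_def)
    moreover have "0 \<le> a * qf N u" using mult_nonneg_nonneg[OF k w(2)]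
      by (simp add: u_def qf_scale algebra_simps)
    moreover have "0 \<le> b * qf M u" using mult_nonneg_nonneg[OF k w(3)]
      by (simp add: u_def qf_scale algebra_simps)
    moreover have "(1 - x n) * qf M u \<le> x n * qf N u" using mult_left_mono[OF w(4) k]
      by (simp add: u_def qf_scale algebra_simps)
    ultimately show "\<exists>u. u \<in> sphere (0::real^'n) 1 \<and> 0 \<le> a * qf N u \<and> 0 \<le> b * qf M u
             \<and> (1 - x n) * qf M u \<le> x n * qf N u" by (intro exI[of _ u]) simp
  qed
  then obtain u where u: "\<And>n. u n \<in> sphere (0::real^'n) 1" "\<And>n. 0 \<le> a * qf N (u n)"
     "\<And>n. 0 \<le> b * qf M (u n)" "\<And>n. (1 - x n) * qf M (u n) \<le> x n * qf N (u n)"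
    by metis
  obtain v r where v: "v \<in> sphere (0::real^'n) 1" and r: "strict_mono r" and ur: "(u \<circ> r) \<longlonglongrightarrow> v"
    using compact_sphere[of "0::real^'n" 1] u(1) unfolding compact_def by meson
  have xr: "(\<lambda>n. x (r n)) \<longlonglongrightarrow> l" using LIMSEQ_subseq_LIMSEQ[OF xl r] by (simp add: o_def)
  have qN: "(\<lambda>n. qf N (u (r n))) \<longlonglongrightarrow> qf N v" using qf_tendsto[OF ur] by (simp add: o_def)
  have qM: "(\<lambda>n. qf M (u (r n))) \<longlonglongrightarrow> qf M v" using qf_tendsto[OF ur] by (simp add: o_def)
  have "0 \<le> l" using xS by (intro LIMSEQ_le_const[OF xl]) auto
  moreover have "l \<le> 1" using xS by (intro LIMSEQ_le_const2[OF xl]) auto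
  moreover have "v \<noteq> 0" using v by auto
  moreover have "0 \<le> a * qf N v"
    by (rule LIMSEQ_le_const[OF tendsto_mult[OF tendsto_const qN]]) (use u in auto)
  moreover have "0 \<le> b * qf M v"
    by (rule LIMSEQ_le_const[OF tendsto_mult[OF tendsto_const qM]]) (use u in auto)
  moreover have "(1 - l) * qf M v \<le> l * qf N v"
    by (rule LIMSEQ_le[OF tendsto_mult[OF tendsto_diff[OF tendsto_const xr] qM] tendsto_mult[OF xr qN]])
       (use u in auto)
  ultimately show "l \<in> ?S" by blast
qed

lemma slemma:
  fixes M N :: "real^'n^'n"
  assumes sM: "sym_mat M" and sN: "sym_mat N"
    and V: "\<forall>w. w \<noteq> 0 \<and> 0 \<le> qf N w \<longrightarrow> 0 < qf M w"
  shows "\<exists>\<alpha>\<ge>0. pd (M - \<alpha> *\<^sub>R N)"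
proof (rule ccontr)
  assume H: "\<not> ?thesis"
  define SA where "SA = {t::real. 0 \<le> t \<and> t \<le> 1 \<and> (\<exists>w. w \<noteq> 0 \<and> 0 \<le> 1 * qf N w \<and> 0 \<le> 0 * qf M w
             \<and> (1-t) * qf M w \<le> t * qf N w)}"
  define SB where "SB = {t::real. 0 \<le> t \<and> t \<le> 1 \<and> (\<exists>w. w \<noteq> 0 \<and> 0 \<le> (-1) * qf N w \<and> 0 \<le> (-1) * qf M w
             \<and> (1-t) * qf M w \<le> t * qf N w)}"
  have cA: "closed SA" unfolding SA_def by (rule closed_param)
  have cB: "closed SB" unfolding SB_def by (rule closed_param)
  have cov: "t \<in> SA \<or> t \<in> SB" if t: "0 \<le> t" "t < 1" for t
  proof (rule ccontr)
    assume nAB: "\<not> (t \<in> SA \<or> t \<in> SB)"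
    define \<beta> where "\<beta> = t / (1 - t)"
    have \<beta>: "\<beta> \<ge> 0" using t by (simp add: \<beta>_def)
    have "pd (M - \<beta> *\<^sub>R N)"
      unfolding pd_def
    proof
      show "sym_mat (M - \<beta> *\<^sub>R N)" using sM sN unfolding sym_mat_def
        by (simp add: transpose_def vec_eq_iff)
      show "\<forall>x. x \<noteq> 0 \<longrightarrow> 0 < x \<bullet> ((M - \<beta> *\<^sub>R N) *v x)"
      proof (intro allI impI)
        fix w :: "real^'n" assume w: "w \<noteq> 0"
        show "0 < w \<bullet> ((M - \<beta> *\<^sub>R N) *v w)"
        proof (rule ccontr)
          assume "\<not> ?thesis"
          then have le: "qf M w \<le> \<beta> * qf N w" using qf_diff[of M \<beta> N w] by (simp add: qf_def)
          then have "(1 - t) * qf M w \<le> (1 - t) * (\<beta> * qf N w)" using t by (intro mult_left_mono) auto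
          also have "(1 - t) * (\<beta> * qf N w) = t * qf N w" using t by (simp add: \<beta>_def)
          finally have le2: "(1 - t) * qf M w \<le> t * qf N w" .
          show False
          proof (cases "0 \<le> qf N w")
            case True
            then have "t \<in> SA" unfolding SA_def using t w le2 by auto
            then show False using nAB by blast
          next
            case False
            then have "\<beta> * qf N w \<le> 0" using \<beta> by (simp add: mult_nonneg_nonpos)
            then have "t \<in> SB" unfolding SB_def using t w le2 le False by auto
            then show False using nAB by blast
          qed
        qed
      qed
    qed
    then show False using H \<beta> by blast
  qed
  have "0 \<notin> SA"
  proof
    assume "0 \<in> SA"
    then obtain w where "w \<noteq> 0" "0 \<le> qf N w" "qf M w \<le> 0" unfolding SA_def by auto
    then show False using V by force
  qed
  then have B0: "0 \<in> SB" using cov[of 0] by auto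
  have bdd: "bdd_above SB" unfolding SB_def by (rule bdd_aboveI[of _ 1]) auto
  define c where "c = Sup SB"
  have cB': "c \<in> SB" unfolding c_def using closed_contains_Sup[OF _ bdd cB] B0 by blast
  have "1 \<notin> SB"
  proof
    assume "1 \<in> SB"
    then obtain w where "w \<noteq> 0" "qf N w \<le> 0" "qf M w \<le> 0" "0 \<le> qf N w" unfolding SB_def by auto
    then show False using V by force
  qed
  then have c1: "c < 1" using cB' unfolding SB_def by force
  have c0: "0 \<le> c" using cB' unfolding SB_def by auto
  define y where "y n = c + (1 - c) / real (Suc (Suc n))" for n
  have yA: "y n \<in> SA" for n
  proof -
    have "(1 - c) / real (Suc (Suc n)) > 0" using c1 by simp
    moreover have "(1 - c) / real (Suc (Suc n)) < 1 - c" using c1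
      by (simp add: divide_less_eq)
    ultimately have y1: "c < y n" "y n < 1" by (auto simp: y_def)
    have "y n \<notin> SB" using cSup_upper[OF _ bdd, of "y n"] y1 unfolding c_def by force
    then show ?thesis using cov[of "y n"] y1 c0 by auto
  qed
  have "(\<lambda>n. (1 - c) / real n) \<longlonglongrightarrow> 0" by (rule lim_const_over_n)
  then have "(\<lambda>n. (1 - c) / real (Suc (Suc n))) \<longlonglongrightarrow> 0" by (intro LIMSEQ_Suc)
  then have "y \<longlonglongrightarrow> c" unfolding y_def using tendsto_add[OF tendsto_const, of _ 0 sequentially c] by simp
  then have cA': "c \<in> SA" using cA yA unfolding closed_sequential_limits by blast
  obtain w1 where w1: "w1 \<noteq> 0" "qf N w1 \<le> 0" "(1 - c) * qf M w1 \<le> c * qf N w1"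
    using cB' unfolding SB_def by auto
  obtain w2 where w2: "w2 \<noteq> 0" "0 \<le> qf N w2" "(1 - c) * qf M w2 \<le> c * qf N w2"
    using cA' unfolding SA_def by auto
  show False using twovec[OF sM sN V _ w1(1) w2(1) w1(2) w2(2) w1(3) w2(3)] c1 by simp
qed



definition joinv :: "real^'q \<Rightarrow> real^'r \<Rightarrow> real^('q::finite+'r::finite)" where
  "joinv x y = (\<chi> k. case k of Inl i \<Rightarrow> x$i | Inr j \<Rightarrow> y$j)"

lemma sum_UNIV_Plus: "(\<Sum>k\<in>(UNIV::('q::finite+'r::finite) set). f k) = (\<Sum>i\<in>UNIV. f (Inl i)) + (\<Sum>j\<in>UNIV. f (Inr j))"
  using sum.Plus[of "UNIV::'q set" "UNIV::'r set" f] by (simp add: o_def)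

lemma inner_joinv: "joinv a b \<bullet> joinv c d = a \<bullet> c + b \<bullet> d"
  by (simp add: inner_vec_def sum_UNIV_Plus joinv_def)

lemma mult_joinv:
  fixes N :: "real^('q::finite+'r::finite)^('q+'r)"
  shows "N *v joinv x y = joinv (blk11 N *v x + blk12 N *v y) (blk21 N *v x + blk22 N *v y)"
  by (auto simp: vec_eq_iff joinv_def matrix_vector_mult_def sum_UNIV_Plus blk11_def blk12_def
      blk21_def blk22_def split: sum.splits)

lemma joinv_split: "w = joinv (\<chi> i. w$Inl i) (\<chi> j. w$Inr j)"
  by (auto simp: vec_eq_iff joinv_def split: sum.splits)

lemma joinv_eq0: "joinv x y = 0 \<longleftrightarrow> x = 0 \<and> y = 0"
  by (auto simp: vec_eq_iff joinv_def split: sum.splits)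

lemma stack_mult: "stackIZ Z *v x = joinv x (Z *v x)"
proof -
  have "(stackIZ Z *v x) $ k = joinv x (Z *v x) $ k" for k
  proof (cases k)
    case (Inl i)
    have "(stackIZ Z *v x) $ k = (mat 1 *v x) $ i"
      by (simp add: Inl stackIZ_def matrix_vector_mult_def)
    then show ?thesis by (simp add: Inl joinv_def)
  next
    case (Inr j)
    then show ?thesis by (simp add: stackIZ_def matrix_vector_mult_def joinv_def)
  qed
  then show ?thesis by (simp add: vec_eq_iff)
qed

lemma qf_congr: "x \<bullet> ((transpose T ** P ** T) *v x) = qf P (T *v x)"
proof -
  have "x \<bullet> ((transpose T ** P ** T) *v x) = x \<bullet> ((P *v (T *v x)) v* T)"
    by (simp add: matrix_vector_mul_assoc[symmetric])
  also have "\<dots> = (P *v (T *v x)) \<bullet> (T *v x)"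
    by (metis inner_commute dot_lmul_matrix)
  finally show ?thesis by (simp add: qf_def inner_commute)
qed

lemma sym_congr: "sym_mat P \<Longrightarrow> sym_mat (transpose T ** P ** T)"
  by (simp add: sym_mat_def matrix_transpose_mul matrix_mul_assoc)

lemma Zset_iff: "sym_mat P \<Longrightarrow> Z \<in> Zset P \<longleftrightarrow> (\<forall>x. 0 \<le> qf P (joinv x (Z *v x)))"
  by (simp add: Zset_def psd_def sym_congr qf_congr stack_mult)

lemma Zset_plus_iff: "sym_mat P \<Longrightarrow> Z \<in> Zset_plus P \<longleftrightarrow> (\<forall>x. x \<noteq> 0 \<longrightarrow> 0 < qf P (joinv x (Z *v x)))"
  by (simp add: Zset_plus_def pd_def sym_congr qf_congr stack_mult)

lemma blk_sym12:
  fixes N :: "real^('q::finite+'r::finite)^('q+'r)"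
  assumes "sym_mat N"
  shows "x \<bullet> (blk12 N *v y) = y \<bullet> (blk21 N *v x)"
  using sym_inner[OF assms, of "joinv x 0" "joinv 0 y"]
  by (simp add: mult_joinv inner_joinv)

lemma blk_sym22:
  fixes N :: "real^('q::finite+'r::finite)^('q+'r)"
  assumes "sym_mat N"
  shows "z \<bullet> (blk22 N *v y) = y \<bullet> (blk22 N *v z)"
  using sym_inner[OF assms, of "joinv (0::real^'q) z" "joinv 0 y"]
  by (simp add: mult_joinv inner_joinv)

lemma qf_joinv:
  fixes N :: "real^('q::finite+'r::finite)^('q+'r)"
  assumes "sym_mat N"
  shows "qf N (joinv x y) = x \<bullet> (blk11 N *v x) + 2 * (y \<bullet> (blk21 N *v x)) + y \<bullet> (blk22 N *v y)"
  using blk_sym12[OF assms, of x y]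
  by (simp add: qf_def mult_joinv inner_joinv inner_add_right)

lemma neg_mv: "(- A) *v x = - (A *v (x::real^'n))"
  by (simp add: vec_eq_iff matrix_vector_mult_def sum_negf)

lemma nd_neg: "nd A \<Longrightarrow> x \<noteq> 0 \<Longrightarrow> x \<bullet> (A *v x) < 0"
  by (simp add: nd_def pd_def neg_mv)

lemma pinv_inv:
  fixes A :: "real^'n^'n"
  assumes "A ** B = mat 1" "B ** A = mat 1"
  shows "pinv A = B"
  unfolding pinv_def
proof (rule the_equality)
  show "A ** B ** A = A \<and> B ** A ** B = B \<and> transpose (A ** B) = A ** B \<and> transpose (B ** A) = B ** A"
    using assms by (simp add: transpose_mat)
  fix X assume X: "A ** X ** A = A \<and> X ** A ** X = X \<and> transpose (A ** X) = A ** X \<and> transpose (X ** A) = X ** A"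
  have "B ** (A ** X ** A) ** B = (B ** A) ** X ** (A ** B)" by (simp add: matrix_mul_assoc)
  then have "B ** A ** B = X" using X assms by simp
  then show "X = B" using assms by simp
qed

lemma nd_inverse:
  fixes A :: "real^'n^'n"
  assumes "nd A"
  obtains B where "A ** B = mat 1" "B ** A = mat 1"
proof -
  have "\<forall>x. A *v x = 0 \<longrightarrow> x = 0"
  proof (intro allI impI)
    fix x assume "A *v x = 0"
    then show "x = 0" using nd_neg[OF assms, of x] by (auto)
  qed
  then obtain B where "B ** A = mat 1" using matrix_left_invertible_ker by blast
  then show ?thesis using that matrix_left_right_inverse by blast
qed

lemma key_identity:
  fixes N :: "real^('q::finite+'r::finite)^('q+'r)"
  assumes sN: "sym_mat N" and Ni: "blk22 N ** Ni = mat 1" "Ni ** blk22 N = mat 1"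
  shows "qf N (joinv x y) = x \<bullet> (schur N *v x)
     + (y + Ni *v (blk21 N *v x)) \<bullet> (blk22 N *v (y + Ni *v (blk21 N *v x)))"
proof -
  define p where "p = Ni *v (blk21 N *v x)"
  have Np: "blk22 N *v p = blk21 N *v x"
    by (simp add: p_def matrix_vector_mul_assoc matrix_mul_assoc Ni)
  have pinv: "pinv (blk22 N) = Ni" using pinv_inv[OF Ni] .
  have S: "schur N *v x = blk11 N *v x - blk12 N *v p"
    by (simp add: schur_def pinv p_def matrix_vector_mult_diff_rdistrib matrix_vector_mul_assoc matrix_mul_assoc)
  have e1: "x \<bullet> (blk12 N *v p) = p \<bullet> (blk21 N *v x)" using blk_sym12[OF sN] .
  have e2: "p \<bullet> (blk22 N *v y) = y \<bullet> (blk21 N *v x)" using blk_sym22[OF sN, of p y] Np by simp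
  show ?thesis
    unfolding qf_joinv[OF sN] p_def[symmetric] S
    by (simp add: matrix_vector_right_distrib inner_add_left inner_add_right inner_diff_right Np e1 e2)
qed



lemma outer_mv: "(\<chi> i j. d$i * v$j) *v u = (v \<bullet> u) *\<^sub>R (d::real^'m)"
  by (simp add: vec_eq_iff matrix_vector_mult_def inner_vec_def sum_distrib_left sum_distrib_right
      mult.commute mult.left_commute)

lemma psd_cs:
  fixes S :: "real^'n^'n"
  assumes "psd S" "0 < x \<bullet> (S *v x)"
  shows "(u \<bullet> (S *v x))^2 \<le> (u \<bullet> (S *v u)) * (x \<bullet> (S *v x))"
proof -
  have sS: "sym_mat S" using assms(1) by (simp add: psd_def)
  define sx where "sx = x \<bullet> (S *v x)"
  define t where "t = - (u \<bullet> (S *v x)) / sx"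
  have "0 \<le> qf S (u + t *\<^sub>R x)" using assms(1) by (simp add: psd_def qf_def)
  also have "qf S (u + t *\<^sub>R x) = qf S u + 2 * t * (u \<bullet> (S *v x)) + t^2 * sx"
    using qf_add[OF sS, of u t x] by (simp add: qf_def sx_def)
  also have "\<dots> = qf S u - (u \<bullet> (S *v x))^2 / sx"
    using assms(2) by (simp add: t_def sx_def power2_eq_square field_simps)
  finally have "(u \<bullet> (S *v x))^2 / sx \<le> qf S u" by simp
  then show ?thesis using assms(2) by (simp add: sx_def qf_def pos_divide_le_eq)
qed

lemma vec_cond:
  fixes M N :: "real^('q::finite+'r::finite)^('q+'r)"
  assumes sM: "sym_mat M" and sN: "sym_mat N" and Pi: "N \<in> PiSet" and nd: "nd (blk22 N)"
    and inc: "Zset N \<subseteq> Zset_plus M"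
  shows "\<forall>w. w \<noteq> 0 \<and> 0 \<le> qf N w \<longrightarrow> 0 < qf M w"
proof (intro allI impI, elim conjE)
  fix w assume w0: "w \<noteq> 0" and wN: "0 \<le> qf N w"
  obtain Ni where Ni: "blk22 N ** Ni = mat 1" "Ni ** blk22 N = mat 1" using nd_inverse[OF nd] by blast
  have psdS: "psd (schur N)" using Pi by (simp add: PiSet_def)
  define x where "x = (\<chi> i. w$Inl i)"
  define y where "y = (\<chi> j. w$Inr j)"
  have w: "w = joinv x y" unfolding x_def y_def by (rule joinv_split)
  define S where "S = schur N"
  define N22 where "N22 = blk22 N"
  define Z0 where "Z0 = - (Ni ** blk21 N)"
  have Z0v: "Z0 *v u = - (Ni *v (blk21 N *v u))" for u
    by (simp add: Z0_def neg_mv matrix_vector_mul_assoc)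
  define sx where "sx = x \<bullet> (S *v x)"
  define d where "d = y + Ni *v (blk21 N *v x)"
  define \<gamma> where "\<gamma> = d \<bullet> (N22 *v d)"
  have sx0: "0 \<le> sx" using psdS by (simp add: sx_def S_def psd_def)
  have \<gamma>0: "\<gamma> \<le> 0" using nd_neg[OF nd, of d] by (cases "d = 0") (auto simp: \<gamma>_def N22_def)
  have qw: "qf N w = sx + \<gamma>"
    unfolding w key_identity[OF sN Ni] by (simp add: sx_def S_def \<gamma>_def d_def N22_def)
  have dz: "d = 0" if "sx = 0"
  proof (rule ccontr)
    assume "d \<noteq> 0"
    then have "\<gamma> < 0" using nd_neg[OF nd, of d] by (simp add: \<gamma>_def N22_def)
    then show False using qw wN that by simp
  qed
  have x0: "x \<noteq> 0"
  proof
    assume "x = 0"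
    then have "sx = 0" "d = y" by (simp_all add: sx_def d_def)
    then have "y = 0" using dz by simp
    then show False using w0 w \<open>x = 0\<close> joinv_eq0 by blast
  qed
  define v where "v = (1 / sx) *\<^sub>R (S *v x)"
  define Z where "Z = Z0 + (\<chi> i j. d$i * v$j)"
  have Zv: "Z *v u = - (Ni *v (blk21 N *v u)) + (v \<bullet> u) *\<^sub>R d" for u
    by (simp add: Z_def matrix_vector_mult_add_rdistrib Z0v outer_mv)
  have Zx: "Z *v x = y"
  proof (cases "sx = 0")
    case True
    then have "d = 0" using dz by simp
    then have "y = - (Ni *v (blk21 N *v x))" unfolding d_def by (simp add: add_eq_0_iff)
    then show ?thesis using \<open>d = 0\<close> by (simp add: Zv)
  next
    case False
    have "v \<bullet> x = 1" using False
      by (simp add: v_def sx_def inner_commute)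
    then show ?thesis by (simp add: Zv d_def)
  qed
  have "Z \<in> Zset N"
    unfolding Zset_iff[OF sN]
  proof
    fix u
    have e: "Z *v u + Ni *v (blk21 N *v u) = (v \<bullet> u) *\<^sub>R d" by (simp add: Zv)
    have "qf N (joinv u (Z *v u)) = u \<bullet> (S *v u) + (v \<bullet> u)^2 * \<gamma>"
      unfolding key_identity[OF sN Ni] e
      by (simp add: S_def \<gamma>_def N22_def matrix_vector_mult_scaleR power2_eq_square)
    also have "\<dots> \<ge> 0"
    proof (cases "sx = 0")
      case True
      then have "\<gamma> = 0" using dz by (simp add: \<gamma>_def)
      then show ?thesis using psdS by (simp add: S_def psd_def)
    next
      case False
      then have sxp: "sx > 0" using sx0 by simp
      have "\<gamma> \<ge> - sx" using qw wN by simp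
      have vu: "v \<bullet> u = (u \<bullet> (S *v x)) / sx" by (simp add: v_def inner_commute)
      have "(v \<bullet> u)^2 * \<gamma> \<ge> (v \<bullet> u)^2 * (- sx)"
        using \<open>\<gamma> \<ge> - sx\<close> by (intro mult_left_mono) auto
      moreover have "(v \<bullet> u)^2 * sx = (u \<bullet> (S *v x))^2 / sx"
        using sxp by (simp add: vu power2_eq_square)
      moreover have "(u \<bullet> (S *v x))^2 / sx \<le> u \<bullet> (S *v u)"
        using psd_cs[OF psdS, of x u] sxp by (simp add: S_def sx_def pos_divide_le_eq)
      ultimately show ?thesis by linarith
    qed
    finally show "0 \<le> qf N (joinv u (Z *v u))" .
  qed
  then have "Z \<in> Zset_plus M" using inc by blast
  then have "0 < qf M (joinv x (Z *v x))" using x0 unfolding Zset_plus_iff[OF sM] by blast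
  then show "0 < qf M w" using Zx w by simp
qed



lemma part1:
  fixes M N :: "real^('q::finite+'r::finite)^('q+'r)"
  assumes sM: "sym_mat M" and sN: "sym_mat N" and a: "\<alpha> \<ge> 0" and pd: "pd (M - \<alpha> *\<^sub>R N)"
  shows "Zset N \<subseteq> Zset_plus M"
proof
  fix Z assume "Z \<in> Zset N"
  then have Z: "\<forall>x. 0 \<le> qf N (joinv x (Z *v x))" using Zset_iff[OF sN] by blast
  show "Z \<in> Zset_plus M" unfolding Zset_plus_iff[OF sM]
  proof (intro allI impI)
    fix x :: "real^'q" assume "x \<noteq> 0"
    then have "joinv x (Z *v x) \<noteq> 0" using joinv_eq0 by blast
    then have "0 < qf (M - \<alpha> *\<^sub>R N) (joinv x (Z *v x))" using pd by (simp add: pd_def qf_def)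
    moreover have "0 \<le> \<alpha> * qf N (joinv x (Z *v x))" using Z a by simp
    ultimately show "0 < qf M (joinv x (Z *v x))" by (simp add: qf_diff)
  qed
qed

theorem mainTheorem10:
  fixes M N :: "real^('q::finite + 'r::finite)^('q + 'r)"
  assumes "sym_mat M" and "sym_mat N"
  shows "((\<exists>\<alpha>::real. \<alpha> \<ge> 0 \<and> pd (M - \<alpha> *\<^sub>R N)) \<longrightarrow> Zset N \<subseteq> Zset_plus M)
     \<and> ((N \<in> PiSet \<and> nd (blk22 N)) \<longrightarrow>
          (Zset N \<subseteq> Zset_plus M \<longleftrightarrow> (\<exists>\<alpha>::real. \<alpha> \<ge> 0 \<and> pd (M - \<alpha> *\<^sub>R N))))"
  using part1[OF assms] vec_cond[OF assms] slemma[OF assms] by blast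

end
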